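(* Fix $n$ and let $\mathbb{A}$ be the set of adjacency matrices $A_\mathcal{D}$ of DAGs $\mathcal{D}$ on node set $[n]$ such that $i\to j\in E^\mathcal{D}$ implies $i<j$ (equivalently, $A_\mathcal{D}$ is strictly upper triangular). For $A_\mathcal{D}\in\mathbb{A}$ let $T=\sum_{p=0}^{n-1}A_\mathcal{D}^p$ and $U_\mathcal{D}=T^\top T$, and let $\mathbb{Y}=\{U_\mathcal{D}:A_\mathcal{D}\in\mathbb{A}\}$. Then the map $f:\mathbb{A}\to\mathbb{Y}$, $f(A_\mathcal{D})=U_\mathcal{D}$, is a bijection, and $a(U_\mathcal{D})$ is the adjacency matrix of the unconditional dependence graph $\mathcal{U}^\mathcal{D}$.
   Context: The adjacency matrix of a DAG on $[n]$ has $(i,j)$ entry $1$ iff $i\to j$ is an edge, else $0$. For a symmetric matrix $M$, $a(M)$ is the $0/1$ matrix with $a(M)_{v,w}=1$ iff $v\neq w$ and $M_{v,w}\neq0$. A trek in a DAG is a path (no repeated vertices) containing no collider (no node whose two incident path edges both point into it). The unconditional dependence graph $\mathcal{U}^\mathcal{D}$ is the undirected graph on the node set of $\mathcal{D}$ in which distinct $v,w$ are adjacent iff there is a trek between them in $\mathcal{D}$. *)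

theory Defs
  imports Main "Jordan_Normal_Form.Matrix"
begin

text \<open>Nodes of a DAG on [n] are represented as 0,...,n-1; a DAG is given by its
  edge relation E (pairs (i,j) meaning i -> j).\<close>

definition dag_on :: "nat \<Rightarrow> (nat \<times> nat) set \<Rightarrow> bool" where
  "dag_on n E \<longleftrightarrow> E \<subseteq> {..<n} \<times> {..<n} \<and> acyclic E"

definition ordered_dag_on :: "nat \<Rightarrow> (nat \<times> nat) set \<Rightarrow> bool" where
  "ordered_dag_on n E \<longleftrightarrow> dag_on n E \<and> (\<forall>(i,j)\<in>E. i < j)"

definition adj_mat :: "nat \<Rightarrow> (nat \<times> nat) set \<Rightarrow> int mat" where
  "adj_mat n E = mat n n (\<lambda>(i,j). if (i,j) \<in> E then 1 else 0)"

definition T_mat :: "nat \<Rightarrow> int mat \<Rightarrow> int mat" where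
  "T_mat n A = mat n n (\<lambda>(i,j). \<Sum>p<n. (A ^\<^sub>m p) $$ (i,j))"

definition U_mat :: "nat \<Rightarrow> int mat \<Rightarrow> int mat" where
  "U_mat n A = transpose_mat (T_mat n A) * T_mat n A"

definition supp_adj :: "int mat \<Rightarrow> int mat" where
  "supp_adj M = mat (dim_row M) (dim_col M)
     (\<lambda>(v,w). if v \<noteq> w \<and> M $$ (v,w) \<noteq> 0 then 1 else 0)"

definition is_trek :: "(nat \<times> nat) set \<Rightarrow> nat list \<Rightarrow> bool" where
  "is_trek E p \<longleftrightarrow> p \<noteq> [] \<and> distinct p \<and>
     (\<forall>k. Suc k < length p \<longrightarrow> (p!k, p!Suc k) \<in> E \<or> (p!Suc k, p!k) \<in> E) \<and>
     (\<forall>k. 0 < k \<and> Suc k < length p \<longrightarrow>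
        \<not> ((p!(k-1), p!k) \<in> E \<and> (p!Suc k, p!k) \<in> E))"

definition trek_between :: "(nat \<times> nat) set \<Rightarrow> nat \<Rightarrow> nat \<Rightarrow> bool" where
  "trek_between E v w \<longleftrightarrow> (\<exists>p. is_trek E p \<and> hd p = v \<and> last p = w)"

definition uncond_dep_adj :: "nat \<Rightarrow> (nat \<times> nat) set \<Rightarrow> int mat" where
  "uncond_dep_adj n E = mat n n (\<lambda>(v,w). if v \<noteq> w \<and> trek_between E v w then 1 else 0)"

end

theory Submission
  imports Defs
begin

lemma mult_entry:
  assumes "A \<in> carrier_mat n n" "B \<in> carrier_mat n n" "i < n" "j < n"
  shows "(A * B) $$ (i,j) = (\<Sum>k<n. A $$ (i,k) * B $$ (k,j))"
  using assms by (auto simp: scalar_prod_def lessThan_atLeast0 intro!: sum.cong)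

lemma adj_carrier[simp]: "adj_mat n E \<in> carrier_mat n n"
  by (simp add: adj_mat_def)

lemma adj_dims[simp]: "dim_row (adj_mat n E) = n" "dim_col (adj_mat n E) = n"
  by (simp_all add: adj_mat_def)

lemma adj_entry: "i < n \<Longrightarrow> j < n \<Longrightarrow> adj_mat n E $$ (i,j) = (if (i,j) \<in> E then 1 else 0)"
  by (simp add: adj_mat_def)

lemma relpow_mono_idx:
  assumes "\<forall>(i,j)\<in>E. i < j" "(i,j) \<in> E ^^ p" shows "i + p \<le> j"
  using assms(2)
proof (induction p arbitrary: j)
  case 0 then show ?case by simp
next
  case (Suc p)
  then obtain k where "(i,k) \<in> E^^p" "(k,j) \<in> E" by auto
  with Suc.IH assms(1) show ?case by fastforce
qed

lemma pow_entry:
  assumes od: "ordered_dag_on n E" and ij: "i < n" "j < n"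
  shows "0 \<le> (adj_mat n E ^\<^sub>m p) $$ (i,j) \<and>
         ((adj_mat n E ^\<^sub>m p) $$ (i,j) > 0 \<longleftrightarrow> (i,j) \<in> E ^^ p)"
  using ij
proof (induction p arbitrary: j)
  case 0 then show ?case by (simp add: adj_mat_def)
next
  case (Suc p)
  have sub: "E \<subseteq> {..<n} \<times> {..<n}" using od by (simp add: ordered_dag_on_def dag_on_def)
  let ?A = "adj_mat n E"
  have e: "(?A ^\<^sub>m Suc p) $$ (i,j) = (\<Sum>k<n. (?A ^\<^sub>m p) $$ (i,k) * ?A $$ (k,j))"
    unfolding pow_mat.simps(2) by (rule mult_entry[OF pow_carrier_mat[OF adj_carrier] adj_carrier Suc.prems])
  have nn: "\<forall>k\<in>{..<n}. 0 \<le> (?A ^\<^sub>m p) $$ (i,k) * ?A $$ (k,j)"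
    using Suc.IH Suc.prems by (auto simp: adj_entry)
  have "(\<Sum>k<n. (?A ^\<^sub>m p) $$ (i,k) * ?A $$ (k,j)) > 0 \<longleftrightarrow>
        (\<exists>k<n. (?A ^\<^sub>m p) $$ (i,k) * ?A $$ (k,j) \<noteq> 0)"
    using nn sum_nonneg[of "{..<n}"] sum_nonneg_eq_0_iff[of "{..<n}"]
    by (smt (verit, ccfv_SIG) finite_lessThan lessThan_iff)
  also have "\<dots> \<longleftrightarrow> (\<exists>k<n. (i,k) \<in> E^^p \<and> (k,j) \<in> E)"
  proof -
    have "\<And>k. k < n \<Longrightarrow> ((?A ^\<^sub>m p) $$ (i,k) * ?A $$ (k,j) \<noteq> 0) = ((i,k) \<in> E^^p \<and> (k,j) \<in> E)"
      proof -
      fix k assume k: "k < n"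
      have "0 < (?A ^\<^sub>m p) $$ (i,k) \<longleftrightarrow> (i,k) \<in> E^^p" using Suc.IH[OF ij(1) k] by blast
      moreover have "0 \<le> (?A ^\<^sub>m p) $$ (i,k)" using Suc.IH[OF ij(1) k] by blast
      ultimately show "((?A ^\<^sub>m p) $$ (i,k) * ?A $$ (k,j) \<noteq> 0) = ((i,k) \<in> E^^p \<and> (k,j) \<in> E)"
        using k Suc.prems by (auto simp: adj_entry)
    qed
    then show ?thesis by blast
  qed
  also have "\<dots> \<longleftrightarrow> (i,j) \<in> E^^Suc p" using sub by auto
  finally show ?case using e nn sum_nonneg by (metis (no_types, lifting))
qed

lemma od_sub: "ordered_dag_on n E \<Longrightarrow> E \<subseteq> {..<n} \<times> {..<n}"
  by (simp add: ordered_dag_on_def dag_on_def)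

lemma od_lt: "ordered_dag_on n E \<Longrightarrow> (i,j) \<in> E \<Longrightarrow> i < j"
  by (auto simp add: ordered_dag_on_def)

lemma rtrancl_le: assumes "ordered_dag_on n E" "(i,j) \<in> E\<^sup>*" shows "i \<le> j"
  using assms(2) by induction (auto dest: od_lt[OF assms(1)])

lemma pow_n_zero:
  assumes od: "ordered_dag_on n E" and ij: "i < n" "j < n"
  shows "(adj_mat n E ^\<^sub>m n) $$ (i,j) = 0"
proof -
  have "(i,j) \<notin> E ^^ n" using relpow_mono_idx[of E i j n] od ij by (auto simp: ordered_dag_on_def)
  then show ?thesis using pow_entry[OF od ij, of n] by simp
qed

lemma T_entry: "i < n \<Longrightarrow> j < n \<Longrightarrow> T_mat n A $$ (i,j) = (\<Sum>p<n. (A ^\<^sub>m p) $$ (i,j))"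
  by (simp add: T_mat_def)

lemma T_carrier[simp]: "T_mat n A \<in> carrier_mat n n"
  by (simp add: T_mat_def)

lemma T_dims[simp]: "dim_row (T_mat n A) = n" "dim_col (T_mat n A) = n"
  by (simp_all add: T_mat_def)

lemma T_nonneg:
  assumes od: "ordered_dag_on n E" and ij: "i < n" "j < n"
  shows "0 \<le> T_mat n (adj_mat n E) $$ (i,j)"
  using pow_entry[OF od ij] by (simp add: T_entry ij sum_nonneg)

lemma T_nz:
  assumes od: "ordered_dag_on n E" and ij: "i < n" "j < n"
  shows "T_mat n (adj_mat n E) $$ (i,j) \<noteq> 0 \<longleftrightarrow> (i,j) \<in> E\<^sup>*"
proof -
  let ?f = "\<lambda>p. (adj_mat n E ^\<^sub>m p) $$ (i,j)"
  have nn: "\<forall>p\<in>{..<n}. 0 \<le> ?f p" using pow_entry[OF od ij] by simp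
  have "(\<Sum>p<n. ?f p) \<noteq> 0 \<longleftrightarrow> (\<exists>p<n. ?f p \<noteq> 0)"
    using sum_nonneg_eq_0_iff[of "{..<n}" ?f] nn by auto
  also have "\<dots> \<longleftrightarrow> (\<exists>p<n. (i,j) \<in> E^^p)"
    using pow_entry[OF od ij] by (metis order_less_le)
  also have "\<dots> \<longleftrightarrow> (i,j) \<in> E\<^sup>*"
  proof
    assume "\<exists>p<n. (i,j) \<in> E^^p" then show "(i,j) \<in> E\<^sup>*" using relpow_imp_rtrancl by blast
  next
    assume "(i,j) \<in> E\<^sup>*"
    then obtain p where p: "(i,j) \<in> E^^p" using rtrancl_power by blast
    have "i + p \<le> j" using relpow_mono_idx[OF _ p] od by (auto simp: ordered_dag_on_def)
    then show "\<exists>p<n. (i,j) \<in> E^^p" using p ij by (intro exI[of _ p]) auto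
  qed
  finally show ?thesis by (simp add: T_entry ij)
qed

lemma T_diag:
  assumes od: "ordered_dag_on n E" and i: "i < n"
  shows "T_mat n (adj_mat n E) $$ (i,i) = 1"
proof -
  have "\<forall>p\<in>{..<n}. (adj_mat n E ^\<^sub>m p) $$ (i,i) = (if p = 0 then 1 else 0)"
  proof
    fix p assume "p \<in> {..<n}"
    show "(adj_mat n E ^\<^sub>m p) $$ (i,i) = (if p = 0 then 1 else 0)"
    proof (cases "p = 0")
      case True then show ?thesis using i by (simp add: adj_mat_def)
    next
      case False
      have "(i,i) \<notin> E^^p" using relpow_mono_idx[of E i i p] od False by (auto simp: ordered_dag_on_def)
      then show ?thesis using pow_entry[OF od i i, of p] False by simp
    qed
  qed
  then have "T_mat n (adj_mat n E) $$ (i,i) = (\<Sum>p<n. (if p = 0 then 1 else 0))"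
    by (simp add: T_entry i)
  also have "\<dots> = 1" using i by (simp add: sum.delta)
  finally show ?thesis .
qed

lemma T_low:
  assumes od: "ordered_dag_on n E" and ij: "i < n" "j < n" "j < i"
  shows "T_mat n (adj_mat n E) $$ (i,j) = 0"
  using T_nz[OF od ij(1,2)] rtrancl_le[OF od, of i j] ij(3) by auto

lemma pow_comm: "A \<in> carrier_mat n n \<Longrightarrow> A * A ^\<^sub>m p = A ^\<^sub>m p * A"
proof (induction p)
  case 0 then show ?case by simp
next
  case (Suc p)
  have "A * A ^\<^sub>m Suc p = (A * A ^\<^sub>m p) * A"
    unfolding pow_mat.simps(2) by (rule assoc_mult_mat[symmetric, OF Suc.prems pow_carrier_mat[OF Suc.prems] Suc.prems])
  also have "\<dots> = A ^\<^sub>m Suc p * A" using Suc by simp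
  finally show ?case .
qed

lemma T_A_sum:
  assumes i: "i < n" and j: "j < n"
  shows "(\<Sum>k<n. T_mat n (adj_mat n E) $$ (i,k) * adj_mat n E $$ (k,j))
        = (\<Sum>p<n. (adj_mat n E ^\<^sub>m Suc p) $$ (i,j))"
proof -
  let ?A = "adj_mat n E"
  have "(\<Sum>k<n. T_mat n ?A $$ (i,k) * ?A $$ (k,j)) = (\<Sum>k<n. \<Sum>p<n. (?A ^\<^sub>m p) $$ (i,k) * ?A $$ (k,j))"
    using i by (simp add: T_entry sum_distrib_right)
  also have "\<dots> = (\<Sum>p<n. \<Sum>k<n. (?A ^\<^sub>m p) $$ (i,k) * ?A $$ (k,j))"
    by (rule sum.swap)
  also have "\<dots> = (\<Sum>p<n. (?A ^\<^sub>m p * ?A) $$ (i,j))"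
    by (rule sum.cong[OF refl], rule mult_entry[symmetric, OF pow_carrier_mat[OF adj_carrier] adj_carrier i j])
  also have "\<dots> = (\<Sum>p<n. (?A ^\<^sub>m Suc p) $$ (i,j))" by simp
  finally show ?thesis .
qed

lemma A_T_sum:
  assumes i: "i < n" and j: "j < n"
  shows "(\<Sum>k<n. adj_mat n E $$ (i,k) * T_mat n (adj_mat n E) $$ (k,j))
        = (\<Sum>p<n. (adj_mat n E ^\<^sub>m Suc p) $$ (i,j))"
proof -
  let ?A = "adj_mat n E"
  have "(\<Sum>k<n. ?A $$ (i,k) * T_mat n ?A $$ (k,j)) = (\<Sum>k<n. \<Sum>p<n. ?A $$ (i,k) * (?A ^\<^sub>m p) $$ (k,j))"
    using j by (simp add: T_entry sum_distrib_left)
  also have "\<dots> = (\<Sum>p<n. \<Sum>k<n. ?A $$ (i,k) * (?A ^\<^sub>m p) $$ (k,j))"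
    by (rule sum.swap)
  also have "\<dots> = (\<Sum>p<n. (?A * ?A ^\<^sub>m p) $$ (i,j))"
    by (rule sum.cong[OF refl], rule mult_entry[symmetric, OF adj_carrier pow_carrier_mat[OF adj_carrier] i j])
  also have "\<dots> = (\<Sum>p<n. (?A ^\<^sub>m Suc p) $$ (i,j))"
    by (simp del: pow_mat.simps add: pow_mat.simps(2) pow_comm[OF adj_carrier])
  finally show ?thesis .
qed

lemma telescope_T:
  assumes od: "ordered_dag_on n E" and i: "i < n" and j: "j < n"
  shows "T_mat n (adj_mat n E) $$ (i,j) - (\<Sum>p<n. (adj_mat n E ^\<^sub>m Suc p) $$ (i,j)) = (if i = j then 1 else 0)"
proof -
  let ?f = "\<lambda>p. (adj_mat n E ^\<^sub>m p) $$ (i,j)"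
  have "T_mat n (adj_mat n E) $$ (i,j) - (\<Sum>p<n. ?f (Suc p)) = (\<Sum>p<n. ?f p - ?f (Suc p))"
    using i j by (simp add: T_entry sum_subtractf)
  also have "\<dots> = ?f 0 - ?f n" by (rule sum_lessThan_telescope')
  also have "\<dots> = (if i = j then 1 else 0)" using pow_n_zero[OF od i j] i j by (simp add: adj_mat_def)
  finally show ?thesis .
qed

lemma T_right_inv:
  assumes od: "ordered_dag_on n E"
  shows "T_mat n (adj_mat n E) * (1\<^sub>m n - adj_mat n E) = 1\<^sub>m n"
proof (rule eq_matI)
  fix i j assume i: "i < dim_row (1\<^sub>m n :: int mat)" and j: "j < dim_col (1\<^sub>m n :: int mat)"
  then have i: "i < n" and j: "j < n" by auto
  let ?T = "T_mat n (adj_mat n E)" and ?A = "adj_mat n E"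
  have "(?T * (1\<^sub>m n - ?A)) $$ (i,j) = (\<Sum>k<n. ?T $$ (i,k) * ((if k = j then 1 else 0) - ?A $$ (k,j)))"
    unfolding mult_entry[OF T_carrier minus_carrier_mat[OF adj_carrier] i j] using i j by (auto intro!: sum.cong)
  also have "\<dots> = (\<Sum>k<n. ?T $$ (i,k) * (if k = j then 1 else 0)) - (\<Sum>k<n. ?T $$ (i,k) * ?A $$ (k,j))"
    by (simp add: right_diff_distrib sum_subtractf)
  also have "\<dots> = ?T $$ (i,j) - (\<Sum>p<n. (?A ^\<^sub>m Suc p) $$ (i,j))"
    using j by (simp add: T_A_sum[OF i j] if_distrib[of "\<lambda>x. _ * x"] sum.delta cong: if_cong)
  also have "\<dots> = 1\<^sub>m n $$ (i,j)" using telescope_T[OF od i j] i j by simp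
  finally show "(?T * (1\<^sub>m n - ?A)) $$ (i,j) = 1\<^sub>m n $$ (i,j)" .
qed auto

lemma T_left_inv:
  assumes od: "ordered_dag_on n E"
  shows "(1\<^sub>m n - adj_mat n E) * T_mat n (adj_mat n E) = 1\<^sub>m n"
proof (rule eq_matI)
  fix i j assume i: "i < dim_row (1\<^sub>m n :: int mat)" and j: "j < dim_col (1\<^sub>m n :: int mat)"
  then have i: "i < n" and j: "j < n" by auto
  let ?T = "T_mat n (adj_mat n E)" and ?A = "adj_mat n E"
  have "((1\<^sub>m n - ?A) * ?T) $$ (i,j) = (\<Sum>k<n. ((if i = k then 1 else 0) - ?A $$ (i,k)) * ?T $$ (k,j))"
    unfolding mult_entry[OF minus_carrier_mat[OF adj_carrier] T_carrier i j] using i j by (auto intro!: sum.cong)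
  also have "\<dots> = (\<Sum>k<n. (if i = k then 1 else 0) * ?T $$ (k,j)) - (\<Sum>k<n. ?A $$ (i,k) * ?T $$ (k,j))"
    by (simp add: left_diff_distrib sum_subtractf)
  also have "\<dots> = ?T $$ (i,j) - (\<Sum>p<n. (?A ^\<^sub>m Suc p) $$ (i,j))"
    using i by (simp add: A_T_sum[OF i j] if_distrib[of "\<lambda>x. x * _"] sum.delta cong: if_cong)
  also have "\<dots> = 1\<^sub>m n $$ (i,j)" using telescope_T[OF od i j] i j by simp
  finally show "((1\<^sub>m n - ?A) * ?T) $$ (i,j) = 1\<^sub>m n $$ (i,j)" .
qed auto

lemma U_entry:
  assumes i: "i < n" and j: "j < n"
  shows "U_mat n A $$ (i,j) = (\<Sum>k<n. T_mat n A $$ (k,i) * T_mat n A $$ (k,j))"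
  unfolding U_mat_def mult_entry[OF transpose_carrier_mat[THEN iffD2, OF T_carrier] T_carrier i j]
  using i by (intro sum.cong[OF refl]) simp

lemma T_inj:
  assumes od1: "ordered_dag_on n E1" and od2: "ordered_dag_on n E2"
    and U: "U_mat n (adj_mat n E1) = U_mat n (adj_mat n E2)"
  shows "T_mat n (adj_mat n E1) = T_mat n (adj_mat n E2)"
proof -
  let ?T1 = "T_mat n (adj_mat n E1)" and ?T2 = "T_mat n (adj_mat n E2)"
  have "\<forall>j<n. ?T1 $$ (i,j) = ?T2 $$ (i,j)" if "i < n" for i
    using that
  proof (induction i rule: less_induct)
    case (less i)
    show ?case
    proof (intro allI impI)
      fix j assume j: "j < n"
      have split: "(\<Sum>k<n. T_mat n (adj_mat n E) $$ (k,i) * T_mat n (adj_mat n E) $$ (k,j))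
          = T_mat n (adj_mat n E) $$ (i,j) + (\<Sum>k\<in>{..<n} - {i}. T_mat n (adj_mat n E) $$ (k,i) * T_mat n (adj_mat n E) $$ (k,j))"
        if "ordered_dag_on n E" for E
        by (subst sum.remove[of "{..<n}" i]) (simp_all add: less.prems T_diag[OF that less.prems])
      have rest: "(\<Sum>k\<in>{..<n} - {i}. ?T1 $$ (k,i) * ?T1 $$ (k,j)) = (\<Sum>k\<in>{..<n} - {i}. ?T2 $$ (k,i) * ?T2 $$ (k,j))"
      proof (rule sum.cong[OF refl])
        fix k assume k: "k \<in> {..<n} - {i}"
        show "?T1 $$ (k,i) * ?T1 $$ (k,j) = ?T2 $$ (k,i) * ?T2 $$ (k,j)"
        proof (cases "k < i")
          case True then show ?thesis using less.IH[of k] less.prems k j by auto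
        next
          case False then have "i < k" using k by auto
          then show ?thesis using T_low[OF od1, of k i] T_low[OF od2, of k i] less.prems k by auto
        qed
      qed
      have "U_mat n (adj_mat n E1) $$ (i,j) = U_mat n (adj_mat n E2) $$ (i,j)" using U by simp
      then show "?T1 $$ (i,j) = ?T2 $$ (i,j)"
        unfolding U_entry[OF less.prems j] split[OF od1] split[OF od2] rest by simp
    qed
  qed
  then show ?thesis by (intro eq_matI) auto
qed

lemma adj_inj:
  assumes od1: "ordered_dag_on n E1" and od2: "ordered_dag_on n E2"
    and U: "U_mat n (adj_mat n E1) = U_mat n (adj_mat n E2)"
  shows "adj_mat n E1 = adj_mat n E2"
proof -
  let ?T = "T_mat n (adj_mat n E1)"
  let ?B1 = "1\<^sub>m n - adj_mat n E1" and ?B2 = "1\<^sub>m n - adj_mat n E2"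
  have B1: "?B1 \<in> carrier_mat n n" and B2: "?B2 \<in> carrier_mat n n"
    by (auto intro: minus_carrier_mat[OF adj_carrier])
  have Teq: "?T = T_mat n (adj_mat n E2)" by (rule T_inj[OF od1 od2 U])
  have "?B1 = ?B1 * 1\<^sub>m n" using B1 by simp
  also have "\<dots> = ?B1 * (?T * ?B2)" using T_right_inv[OF od2] Teq by simp
  also have "\<dots> = (?B1 * ?T) * ?B2" using B1 B2 T_carrier by (simp only: assoc_mult_mat[OF B1 T_carrier B2])
  also have "\<dots> = ?B2" using T_left_inv[OF od1] B2 by simp
  finally have eq: "?B1 = ?B2" .
  show ?thesis
  proof (rule eq_matI)
    fix i j assume "i < dim_row (adj_mat n E2)" "j < dim_col (adj_mat n E2)"
    then have i: "i < n" and j: "j < n" by auto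
    have "?B1 $$ (i,j) = ?B2 $$ (i,j)" using eq by simp
    then show "adj_mat n E1 $$ (i,j) = adj_mat n E2 $$ (i,j)" using i j by simp
  qed auto
qed

definition shape :: "(nat \<times> nat) set \<Rightarrow> nat \<Rightarrow> nat list \<Rightarrow> bool" where
  "shape E m q \<longleftrightarrow> m < length q \<and>
     (\<forall>k. Suc k < length q \<longrightarrow> (if k < m then (q!Suc k, q!k) \<in> E else (q!k, q!Suc k) \<in> E))"

lemma shapeD: "shape E m q \<Longrightarrow> Suc k < length q \<Longrightarrow>
  (if k < m then (q!Suc k, q!k) \<in> E else (q!k, q!Suc k) \<in> E)"
  by (simp add: shape_def)

lemma shape_trek:
  assumes lt: "\<forall>(i,j)\<in>E. i < j" and sh: "shape E m q" and d: "distinct q"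
  shows "is_trek E q"
  unfolding is_trek_def
proof (intro conjI allI impI)
  show "q \<noteq> []" using sh by (auto simp: shape_def)
  show "distinct q" by (rule d)
next
  fix k assume "Suc k < length q"
  then show "(q!k, q!Suc k) \<in> E \<or> (q!Suc k, q!k) \<in> E"
    using shapeD[OF sh, of k] by (auto split: if_splits)
next
  fix k assume k: "0 < k \<and> Suc k < length q"
  show "\<not> ((q!(k-1), q!k) \<in> E \<and> (q!Suc k, q!k) \<in> E)"
  proof
    assume c: "(q!(k-1), q!k) \<in> E \<and> (q!Suc k, q!k) \<in> E"
    have sk: "Suc (k-1) = k" using k by simp
    show False
    proof (cases "k - 1 < m")
      case True
      then have "(q!Suc (k-1), q!(k-1)) \<in> E" using shapeD[OF sh, of "k-1"] k sk by simp
      then have "(q!k, q!(k-1)) \<in> E" using sk by simp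
      moreover have "(q!(k-1), q!k) \<in> E" using c by blast
      ultimately show False using lt by (metis (no_types, lifting) case_prodD order_less_asym)
    next
      case False
      then have "\<not> k < m" by simp
      then have "(q!k, q!Suc k) \<in> E" using shapeD[OF sh, of k] k by simp
      moreover have "(q!Suc k, q!k) \<in> E" using c by blast
      ultimately show False using lt by (metis (no_types, lifting) case_prodD order_less_asym)
    qed
  qed
qed

lemma shape_Cons:
  assumes sh: "shape E m q" and e: "(hd q, z) \<in> E"
  shows "shape E (Suc m) (z#q)"
  unfolding shape_def
proof (intro conjI allI impI)
  show "Suc m < length (z#q)" using sh by (simp add: shape_def)
next
  fix k assume k: "Suc k < length (z#q)"
  show "if k < Suc m then ((z#q)!Suc k, (z#q)!k) \<in> E else ((z#q)!k, (z#q)!Suc k) \<in> E"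
  proof (cases k)
    case 0
    have "q \<noteq> []" using sh by (auto simp: shape_def)
    then show ?thesis using 0 e by (simp add: hd_conv_nth)
  next
    case (Suc k')
    then have "Suc k' < length q" using k by simp
    then show ?thesis using sh Suc unfolding shape_def by simp
  qed
qed

lemma shape_append:
  assumes "R \<noteq> []" "\<forall>k. Suc k < length R \<longrightarrow> (R!Suc k, R!k) \<in> E"
    "P \<noteq> []" "\<forall>k. Suc k < length P \<longrightarrow> (P!k, P!Suc k) \<in> E" "last R = hd P"
  shows "shape E (length R - 1) (butlast R @ P)"
  using assms
proof (induction R)
  case Nil then show ?case by simp
next
  case (Cons z R')
  show ?case
  proof (cases "R' = []")
    case True
    then show ?thesis using Cons.prems by (simp add: shape_def)
  next
    case False
    have bw: "\<forall>k. Suc k < length R' \<longrightarrow> (R'!Suc k, R'!k) \<in> E"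
    proof (intro allI impI)
      fix k assume "Suc k < length R'"
      then show "(R'!Suc k, R'!k) \<in> E" using Cons.prems(2)[rule_format, of "Suc k"] by simp
    qed
    have IH: "shape E (length R' - 1) (butlast R' @ P)"
      using Cons.IH[OF False bw Cons.prems(3,4)] Cons.prems(5) False by simp
    have hd: "hd (butlast R' @ P) = hd R'"
      using False Cons.prems(5) by (cases R') (auto simp: hd_append)
    have e: "(hd R', z) \<in> E" using Cons.prems(2)[rule_format, of 0] False
      by (cases R') auto
    have "shape E (Suc (length R' - 1)) (z # (butlast R' @ P))"
      by (rule shape_Cons[OF IH]) (simp add: hd e)
    then show ?thesis using False by simp
  qed
qed

lemma fwd_path:
  fixes E :: "(nat \<times> nat) set"
  assumes "(c,w) \<in> E\<^sup>*" and lt: "\<forall>(i,j)\<in>E. i < j"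
  shows "\<exists>P. P \<noteq> [] \<and> hd P = c \<and> last P = w \<and> (\<forall>k. Suc k < length P \<longrightarrow> (P!k, P!Suc k) \<in> E)
     \<and> sorted_wrt (<) P \<and> (\<forall>d\<in>set P. (c,d) \<in> E\<^sup>* \<and> (d,w) \<in> E\<^sup>*)"
  using assms(1)
proof (induction rule: converse_rtrancl_induct)
  case base
  show ?case by (intro exI[of _ "[w]"]) auto
next
  case (step c y)
  then obtain P where P: "P \<noteq> []" "hd P = y" "last P = w"
    "\<forall>k. Suc k < length P \<longrightarrow> (P!k, P!Suc k) \<in> E" "sorted_wrt (<) P"
    "\<forall>d\<in>set P. (y,d) \<in> E\<^sup>* \<and> (d,w) \<in> E\<^sup>*" by blast
  have cy: "c < y" using step.hyps(1) lt by auto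
  have ge: "\<forall>x\<in>set P. y \<le> x" using P(1,2,5) by (cases P) auto
  have "\<forall>k. Suc k < length (c#P) \<longrightarrow> ((c#P)!k, (c#P)!Suc k) \<in> E"
  proof (intro allI impI)
    fix k assume "Suc k < length (c#P)"
    then show "((c#P)!k, (c#P)!Suc k) \<in> E"
      using P step.hyps(1) by (cases k) (auto simp: hd_conv_nth)
  qed
  moreover have "sorted_wrt (<) (c#P)" using P(5) ge cy by auto
  moreover have "\<forall>d\<in>set (c#P). (c,d) \<in> E\<^sup>* \<and> (d,w) \<in> E\<^sup>*"
    using P(6) step.hyps by auto
  ultimately show ?case using P(1,3) by (intro exI[of _ "c#P"]) auto
qed

lemma bwd_path:
  fixes E :: "(nat \<times> nat) set"
  assumes "(c,v) \<in> E\<^sup>*" and lt: "\<forall>(i,j)\<in>E. i < j"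
  shows "\<exists>R. R \<noteq> [] \<and> hd R = v \<and> last R = c \<and> (\<forall>k. Suc k < length R \<longrightarrow> (R!Suc k, R!k) \<in> E)
     \<and> sorted_wrt (>) R \<and> (\<forall>d\<in>set R. (c,d) \<in> E\<^sup>* \<and> (d,v) \<in> E\<^sup>*)"
  using assms(1)
proof (induction rule: rtrancl_induct)
  case base
  show ?case by (intro exI[of _ "[c]"]) auto
next
  case (step y z)
  then obtain R where R: "R \<noteq> []" "hd R = y" "last R = c"
    "\<forall>k. Suc k < length R \<longrightarrow> (R!Suc k, R!k) \<in> E" "sorted_wrt (>) R"
    "\<forall>d\<in>set R. (c,d) \<in> E\<^sup>* \<and> (d,y) \<in> E\<^sup>*" by blast
  have yz: "y < z" using step.hyps(2) lt by auto
  have le: "\<forall>x\<in>set R. x \<le> y" using R(1,2,5) by (cases R) auto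
  have "\<forall>k. Suc k < length (z#R) \<longrightarrow> ((z#R)!Suc k, (z#R)!k) \<in> E"
  proof (intro allI impI)
    fix k assume "Suc k < length (z#R)"
    then show "((z#R)!Suc k, (z#R)!k) \<in> E"
      using R step.hyps(2) by (cases k) (auto simp: hd_conv_nth)
  qed
  moreover have "sorted_wrt (>) (z#R)" using R(5) le yz by auto
  moreover have "\<forall>d\<in>set (z#R). (c,d) \<in> E\<^sup>* \<and> (d,z) \<in> E\<^sup>*"
    using R(6) step.hyps by (auto intro: rtrancl_into_rtrancl)
  ultimately show ?case using R(1,3) by (intro exI[of _ "z#R"]) auto
qed


lemma cf_anc:
  fixes E :: "(nat \<times> nat) set"
  shows "p \<noteq> [] \<Longrightarrow> (\<forall>k. Suc k < length p \<longrightarrow> (p!k, p!Suc k) \<in> E \<or> (p!Suc k, p!k) \<in> E) \<Longrightarrow>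
    (\<forall>k. 0 < k \<and> Suc k < length p \<longrightarrow> \<not> ((p!(k-1), p!k) \<in> E \<and> (p!Suc k, p!k) \<in> E)) \<Longrightarrow>
    (last p, hd p) \<in> E\<^sup>* \<or> (\<exists>c. (c, hd p) \<in> E\<^sup>* \<and> (c, last p) \<in> E\<^sup>* \<and> 2 \<le> length p \<and>
        (p!(length p - 2), last p) \<in> E)"
proof (induction p rule: rev_induct)
  case Nil then show ?case by simp
next
  case (snoc x p)
  show ?case
  proof (cases "p = []")
    case True then show ?thesis by simp
  next
    case False
    define m where "m = length p"
    have m1: "1 \<le> m" using False by (simp add: m_def Suc_le_eq)
    have nth: "\<And>k. k < m \<Longrightarrow> (p @ [x])!k = p!k" by (simp add: m_def nth_append)
    have nthm: "(p @ [x])!m = x" by (simp add: m_def)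
    have lastp: "p!(m-1) = last p" using False by (simp add: m_def last_conv_nth)
    have adj: "\<forall>k. Suc k < length p \<longrightarrow> (p!k, p!Suc k) \<in> E \<or> (p!Suc k, p!k) \<in> E"
    proof (intro allI impI)
      fix k assume k: "Suc k < length p"
      then show "(p!k, p!Suc k) \<in> E \<or> (p!Suc k, p!k) \<in> E"
        using snoc.prems(2)[rule_format, of k] nth[of k] nth[of "Suc k"] by (simp add: m_def)
    qed
    have col: "\<forall>k. 0 < k \<and> Suc k < length p \<longrightarrow> \<not> ((p!(k-1), p!k) \<in> E \<and> (p!Suc k, p!k) \<in> E)"
    proof (intro allI impI)
      fix k assume k: "0 < k \<and> Suc k < length p"
      have km: "k - 1 < m" "k < m" "Suc k < m" using k by (auto simp: m_def)
      then show "\<not> ((p!(k-1), p!k) \<in> E \<and> (p!Suc k, p!k) \<in> E)"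
        using snoc.prems(3)[rule_format, of k] nth[OF km(1)] nth[OF km(2)] nth[OF km(3)] k by (simp add: m_def)
    qed
    note IH = snoc.IH[OF False adj col]
    have edge: "(last p, x) \<in> E \<or> (x, last p) \<in> E"
    proof -
      have a: "m - 1 < m" "Suc (m-1) = m" "Suc (m-1) < length (p @ [x])" using m1 by (auto simp: m_def)
      have "((p@[x])!(m-1), (p@[x])!Suc (m-1)) \<in> E \<or> ((p@[x])!Suc (m-1), (p@[x])!(m-1)) \<in> E"
        using snoc.prems(2) a(3) by blast
      then show ?thesis unfolding a(2) nthm nth[OF a(1)] lastp .
    qed
    have hd: "hd (p @ [x]) = hd p" using False by simp
    have len: "length (p @ [x]) = Suc m" by (simp add: m_def)
    have n2: "(p @ [x])!(length (p @ [x]) - 2) = last p" using len nth[of "m-1"] m1 lastp by simp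
    show ?thesis
    proof (cases "(last p, x) \<in> E")
      case True
      obtain c where c: "(c, hd p) \<in> E\<^sup>*" "(c, last p) \<in> E\<^sup>*"
        using IH by blast
      then have "(c, x) \<in> E\<^sup>*" using True by (meson rtrancl.rtrancl_into_rtrancl)
      then show ?thesis using c hd len n2 True m1 by auto
    next
      case False
      then have xl: "(x, last p) \<in> E" using edge by blast
      show ?thesis
      proof (cases "(last p, hd p) \<in> E\<^sup>*")
        case True
        then have "(x, hd p) \<in> E\<^sup>*" using xl by (meson converse_rtrancl_into_rtrancl)
        then show ?thesis using hd by simp
      next
        case nl: False
        then have m2: "2 \<le> m" and pe: "(p!(m-2), last p) \<in> E" using IH by (auto simp: m_def)
        have "\<not> (((p@[x])!(m-1-1), (p@[x])!(m-1)) \<in> E \<and> ((p@[x])!Suc (m-1), (p@[x])!(m-1)) \<in> E)"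
          using snoc.prems(3)[rule_format, of "m-1"] m2 len by simp
        moreover have "(p@[x])!(m-1-1) = p!(m-2)" using nth[of "m-2"] m2 by (simp add: numeral_2_eq_2)
        moreover have "(p@[x])!(m-1) = last p" using nth[of "m-1"] m1 lastp by simp
        moreover have "(p@[x])!Suc (m-1) = x" using nthm m1 by simp
        ultimately show ?thesis using pe xl by simp
      qed
    qed
  qed
qed


lemma rtrancl_le':
  fixes E :: "(nat \<times> nat) set"
  assumes lt: "\<forall>(i,j)\<in>E. i < j" and "(i,j) \<in> E\<^sup>*" shows "i \<le> j"
  using assms(2) by induction (use lt in fastforce)+

lemma sorted_gt_distinct: "sorted_wrt (>) (R :: nat list) \<Longrightarrow> distinct R"
  by (induction R) auto

lemma trek_iff:
  fixes E :: "(nat \<times> nat) set"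
  assumes lt: "\<forall>(i,j)\<in>E. i < j"
  shows "trek_between E v w \<longleftrightarrow> (\<exists>c. (c,v) \<in> E\<^sup>* \<and> (c,w) \<in> E\<^sup>*)"
proof
  assume "trek_between E v w"
  then obtain p where p: "is_trek E p" "hd p = v" "last p = w" by (auto simp: trek_between_def)
  then have "(last p, hd p) \<in> E\<^sup>* \<or> (\<exists>c. (c, hd p) \<in> E\<^sup>* \<and> (c, last p) \<in> E\<^sup>* \<and> 2 \<le> length p \<and>
        (p!(length p - 2), last p) \<in> E)"
    by (intro cf_anc) (auto simp: is_trek_def)
  then show "\<exists>c. (c,v) \<in> E\<^sup>* \<and> (c,w) \<in> E\<^sup>*" using p(2,3) by auto
next
  assume "\<exists>c. (c,v) \<in> E\<^sup>* \<and> (c,w) \<in> E\<^sup>*"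
  define S where "S = {c. (c,v) \<in> E\<^sup>* \<and> (c,w) \<in> E\<^sup>*}"
  have ne: "S \<noteq> {}" using \<open>\<exists>c. _\<close> by (auto simp: S_def)
  have fin: "finite S"
    by (rule finite_subset[of _ "{..v}"]) (auto simp: S_def intro: rtrancl_le'[OF lt])
  define c where "c = Max S"
  have cS: "c \<in> S" using Max_in[OF fin ne] by (simp add: c_def)
  have cmax: "\<And>d. d \<in> S \<Longrightarrow> d \<le> c" using Max_ge[OF fin] by (simp add: c_def)
  obtain R where R: "R \<noteq> []" "hd R = v" "last R = c" "\<forall>k. Suc k < length R \<longrightarrow> (R!Suc k, R!k) \<in> E"
     "sorted_wrt (>) R" "\<forall>d\<in>set R. (c,d) \<in> E\<^sup>* \<and> (d,v) \<in> E\<^sup>*"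
    using bwd_path[OF _ lt, of c v] cS by (auto simp: S_def)
  obtain P where P: "P \<noteq> []" "hd P = c" "last P = w" "\<forall>k. Suc k < length P \<longrightarrow> (P!k, P!Suc k) \<in> E"
     "sorted_wrt (<) P" "\<forall>d\<in>set P. (c,d) \<in> E\<^sup>* \<and> (d,w) \<in> E\<^sup>*"
    using fwd_path[OF _ lt, of c w] cS by (auto simp: S_def)
  have sh: "shape E (length R - 1) (butlast R @ P)"
    by (rule shape_append) (use R P in auto)
  have gt: "\<forall>d\<in>set (butlast R). c < d"
  proof -
    have "R = butlast R @ [c]" using R(1,3) by (metis append_butlast_last_id)
    then have "sorted_wrt (>) (butlast R @ [c])" using R(5) by simp
    then show ?thesis by (simp add: sorted_wrt_append)
  qed
  have disj: "set (butlast R) \<inter> set P = {}"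
  proof (rule ccontr)
    assume "set (butlast R) \<inter> set P \<noteq> {}"
    then obtain d where d: "d \<in> set (butlast R)" "d \<in> set P" by blast
    then have "d \<in> set R" by (meson in_set_butlastD)
    then have "d \<in> S" using R(6) P(6) d(2) by (auto simp: S_def)
    then show False using cmax gt d(1) by fastforce
  qed
  have dist: "distinct (butlast R @ P)"
    using sorted_gt_distinct[OF R(5)] P(5) disj by (auto simp: distinct_butlast strict_sorted_iff)
  have hd: "hd (butlast R @ P) = v"
  proof (cases "butlast R = []")
    case True
    then have "R = [last R]" using R(1) by (metis append_butlast_last_id append_Nil)
    then have "v = c" using R(2,3) by (metis list.sel(1))
    then show ?thesis using True P(2) by simp
  next
    case False
    then show ?thesis using R(1,2) by (cases R) auto
  qed
  have lst: "last (butlast R @ P) = w" using P(1,3) by simp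
  show "trek_between E v w" unfolding trek_between_def
    using shape_trek[OF lt sh dist] hd lst by blast
qed


lemma U_nz:
  assumes od: "ordered_dag_on n E" and i: "i < n" and j: "j < n"
  shows "U_mat n (adj_mat n E) $$ (i,j) \<noteq> 0 \<longleftrightarrow> trek_between E i j"
proof -
  let ?T = "T_mat n (adj_mat n E)"
  have lt: "\<forall>(a,b)\<in>E. a < b" using od by (auto simp: ordered_dag_on_def)
  have nn: "\<forall>k\<in>{..<n}. 0 \<le> ?T $$ (k,i) * ?T $$ (k,j)"
    using T_nonneg[OF od] i j by auto
  have "(\<Sum>k<n. ?T $$ (k,i) * ?T $$ (k,j)) \<noteq> 0 \<longleftrightarrow> (\<exists>k<n. ?T $$ (k,i) * ?T $$ (k,j) \<noteq> 0)"
    using sum_nonneg_eq_0_iff[of "{..<n}" "\<lambda>k. ?T $$ (k,i) * ?T $$ (k,j)"] nn by auto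
  also have "\<dots> \<longleftrightarrow> (\<exists>k<n. (k,i) \<in> E\<^sup>* \<and> (k,j) \<in> E\<^sup>*)"
    using T_nz[OF od _ i] T_nz[OF od _ j] by auto
  also have "\<dots> \<longleftrightarrow> (\<exists>k. (k,i) \<in> E\<^sup>* \<and> (k,j) \<in> E\<^sup>*)"
    using rtrancl_le[OF od] i by (meson le_less_trans)
  also have "\<dots> \<longleftrightarrow> trek_between E i j" using trek_iff[OF lt] by simp
  finally show ?thesis using U_entry[OF i j] by simp
qed

lemma U_dims[simp]: "dim_row (U_mat n A) = n" "dim_col (U_mat n A) = n"
  by (simp_all add: U_mat_def)

theorem lemma2p4:
  fixes n :: nat and AA YY :: "int mat set"
  defines "AA \<equiv> {adj_mat n E | E. ordered_dag_on n E}"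
  defines "YY \<equiv> U_mat n ` AA"
  shows "bij_betw (U_mat n) AA YY \<and>
         (\<forall>E. ordered_dag_on n E \<longrightarrow>
              supp_adj (U_mat n (adj_mat n E)) = uncond_dep_adj n E)"
proof
  have "inj_on (U_mat n) AA"
  proof (rule inj_onI)
    fix X Y assume "X \<in> AA" "Y \<in> AA" "U_mat n X = U_mat n Y"
    then show "X = Y" unfolding AA_def using adj_inj by blast
  qed
  then show "bij_betw (U_mat n) AA YY" unfolding YY_def by (rule inj_on_imp_bij_betw)
next
  show "\<forall>E. ordered_dag_on n E \<longrightarrow> supp_adj (U_mat n (adj_mat n E)) = uncond_dep_adj n E"
  proof (intro allI impI)
    fix E assume od: "ordered_dag_on n E"
    show "supp_adj (U_mat n (adj_mat n E)) = uncond_dep_adj n E"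
    proof (rule eq_matI)
      fix i j assume "i < dim_row (uncond_dep_adj n E)" "j < dim_col (uncond_dep_adj n E)"
      then have i: "i < n" and j: "j < n" by (auto simp: uncond_dep_adj_def)
      show "supp_adj (U_mat n (adj_mat n E)) $$ (i,j) = uncond_dep_adj n E $$ (i,j)"
        using U_nz[OF od i j] i j by (simp add: supp_adj_def uncond_dep_adj_def)
    qed (auto simp: supp_adj_def uncond_dep_adj_def)
  qed
qed

end
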